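(* Let $X_n(d_1)\subset\mathbb{C}P^{n+1}$ be a nonsingular complex hypersurface of degree $d_1$ with $c_1=n+2-d_1<0$. Then $(-1)^n{\rm Td}(X_n(d_1))\geqslant n+1$.
   Context: The Todd genus of a compact complex $n$-manifold $M$ with formal Chern roots $x_1,\dots,x_n$ is ${\rm Td}(M)=\big(\prod_i\frac{x_i}{1-e^{-x_i}}\big)[M]$. *)

theory Defs
  imports Complex_Main "HOL-Computational_Algebra.Formal_Power_Series"
begin

text \<open>Power series in the hyperplane class h: the Todd series Q(x) = x / (1 - e^(-x)),
  written as the inverse of (1 - e^(-x))/x.\<close>
definition todd_series :: "real fps" where
  "todd_series = inverse (fps_shift 1 (1 - fps_exp (-1)))"

text \<open>The tangent bundle satisfies TX + O(d)|X = (n+2) H|X, so with h the hyperplane class,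
  Td(X) = Q(h)^(n+2) / Q(d h), and evaluating a degree-n class c h^n on [X] gives d c
  (since h^n[X] = d).  Here Q(dh)^(-1) = (1 - e^(-dh))/(dh).\<close>
definition todd_genus_hypersurface :: "nat \<Rightarrow> nat \<Rightarrow> real" where
  "todd_genus_hypersurface n d =
     real d * fps_nth (todd_series ^ (n + 2) *
        (fps_const (1 / real d) * fps_shift 1 (1 - fps_exp (- real d)))) n"

end

theory Submission
  imports Defs
begin

unbundle fps_syntax

definition EE :: "real fps" where "EE = fps_exp (-1)"
definition AA :: "real fps" where "AA = fps_shift 1 (1 - EE)"
definition QQ :: "real fps" where "QQ = inverse AA"

lemma AA0: "AA $ 0 = 1"
  by (simp add: AA_def EE_def)

lemma XA: "fps_X * AA = 1 - EE"
proof (rule fps_ext)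
  fix n show "(fps_X * AA) $ n = (1 - EE) $ n"
    by (cases n) (simp_all add: AA_def EE_def)
qed

lemma QA: "QQ * AA = 1"
  unfolding QQ_def by (rule inverse_mult_eq_1) (simp add: AA0)

lemma EA: "EE = AA + fps_X * fps_deriv AA"
proof -
  have "fps_deriv (fps_X * AA) = fps_deriv (1 - EE)" by (simp add: XA)
  moreover have "fps_const (-1::real) * EE = - EE" by (rule fps_ext) simp
  ultimately show ?thesis by (simp add: EE_def algebra_simps)
qed

lemma dQ: "fps_deriv QQ = - fps_deriv AA * QQ^2"
  unfolding QQ_def by (rule fps_inverse_deriv) (simp add: AA0)

lemma QpowA: "i \<le> m \<Longrightarrow> QQ^m * AA^i = QQ^(m-i)"
proof -
  assume "i \<le> m"
  then have "QQ^m * AA^i = QQ^(m-i) * (QQ*AA)^i"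
    by (simp add: power_mult_distrib power_add[symmetric])
  thus ?thesis by (simp add: QA)
qed

lemma K: "(QQ^(m+1) * EE) $ m = (if m = 0 then 1 else 0)"
proof (cases m)
  case 0
  then show ?thesis by (simp add: QQ_def EE_def AA0)
next
  case (Suc k)
  have eq: "QQ^(m+1) * EE = QQ^m + fps_X * (QQ^(m+1) * fps_deriv AA)"
  proof -
    have "QQ^(m+1) * EE = QQ^m * (QQ * AA) + fps_X * (QQ^(m+1) * fps_deriv AA)"
      by (simp add: EA algebra_simps)
    thus ?thesis by (simp add: QA)
  qed
  have d: "fps_deriv (QQ^m) = - of_nat m * (QQ^(m+1) * fps_deriv AA)"
  proof -
    have "fps_deriv (QQ^m) = of_nat m * fps_deriv QQ * QQ^k"
      using Suc fps_deriv_power'[of QQ m] by simp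
    also have "\<dots> = - of_nat m * (QQ^(Suc (Suc k)) * fps_deriv AA)"
      by (simp add: dQ power2_eq_square algebra_simps)
    finally show ?thesis using Suc by simp
  qed
  have km: "k + 1 = m" using Suc by simp
  have "fps_deriv (QQ^m) $ k = of_nat (k+1) * QQ^m $ (k+1)" by (rule fps_deriv_nth)
  hence "fps_deriv (QQ^m) $ k = of_nat m * QQ^m $ m" by (simp only: km)
  moreover have "fps_deriv (QQ^m) $ k = - of_nat m * (QQ^(m+1) * fps_deriv AA) $ k"
    by (simp add: d)
  ultimately have mm: "of_nat m * QQ^m $ m = - of_nat m * (QQ^(m+1) * fps_deriv AA) $ k"
    by (rule trans[OF sym])
  have mpos: "real m \<noteq> 0" using Suc by simp
  have "of_nat m * (QQ^m $ m + (QQ^(m+1) * fps_deriv AA) $ k) = 0"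
    using mm by (simp only: distrib_left mult_minus_left)
  with mpos have "QQ^m $ m = - (QQ^(m+1) * fps_deriv AA) $ k"
    by (simp add: add_eq_0_iff)
  have m0: "(m = 0) = False" using Suc by simp
  have m1: "m - 1 = k" using Suc by simp
  have "(QQ^(m+1) * EE) $ m = QQ^m $ m + (fps_X * (QQ^(m+1) * fps_deriv AA)) $ m"
    by (simp only: eq fps_add_nth)
  also have "\<dots> = QQ^m $ m + (QQ^(m+1) * fps_deriv AA) $ k"
    by (simp only: fps_X_mult_nth m0 m1 if_False)
  finally show ?thesis using m0 \<open>QQ^m $ m = - (QQ^(m+1) * fps_deriv AA) $ k\<close> by simp
qed

lemma L: "QQ^(p+1) $ p = 1"
proof (induction p)
  case 0
  then show ?case by (simp add: QQ_def AA0)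
next
  case (Suc p)
  have e1: "EE + fps_X * AA = 1" by (simp add: XA)
  have "QQ^(Suc p+1) = QQ^(Suc p+1) * (EE + fps_X * AA)" by (simp add: e1)
  also have "\<dots> = QQ^(Suc p+1) * EE + fps_X * (QQ^(Suc p) * (QQ * AA))"
    by (simp add: algebra_simps)
  finally have "QQ^(Suc p+1) = QQ^(Suc p+1) * EE + fps_X * (QQ^(Suc p) * (QQ * AA))" .
  also have "\<dots> = QQ^(Suc p+1) * EE + fps_X * QQ^(Suc p)" by (simp add: QA)
  finally have eqn: "QQ^(Suc p+1) = QQ^(Suc p+1) * EE + fps_X * QQ^(Suc p)" .
  have "QQ^(Suc p+1) $ Suc p = (QQ^(Suc p+1) * EE + fps_X * QQ^(Suc p)) $ Suc p"
    using eqn by (rule arg_cong)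
  also have "\<dots> = (QQ^(Suc p+1) * EE) $ Suc p + QQ^(Suc p) $ p"
    by (simp only: fps_add_nth fps_X_mult_nth nat.distinct Suc_neq_Zero simp_thms if_False diff_Suc_1)
  also have "\<dots> = 1" using K[of "Suc p"] Suc by simp
  finally show ?case .
qed

lemma alt: "N \<ge> 1 \<Longrightarrow> (\<Sum>i\<le>m. (-1)^i * real (N choose i)) = (-1)^m * real ((N-1) choose m)"
proof (induction m)
  case 0 then show ?case by simp
next
  case (Suc m)
  obtain N' where N: "N = Suc N'" using Suc.prems by (cases N) auto
  have "(\<Sum>i\<le>Suc m. (-1)^i * real (N choose i)) = (-1)^m * real (N' choose m) + (-1)^(Suc m) * real (N choose Suc m)"
    using Suc by (simp add: N)
  also have "\<dots> = (-1)^(Suc m) * real (N' choose Suc m)"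
    by (simp add: N algebra_simps)
  finally show ?case by (simp add: N)
qed

definition cc :: "nat \<Rightarrow> nat \<Rightarrow> real" where "cc d k = real (d choose k) * (-1)^k"

definition GG :: "nat \<Rightarrow> real fps" where
  "GG d = - (\<Sum>k\<in>{1..d}. fps_const (cc d k) * (fps_X^(k-1) * AA^k))"

lemma m1p: "(-1::real fps)^k = fps_const ((-1)^k)"
  by (induct k) (simp_all add: fps_const_neg[symmetric] del: fps_const_neg)

lemma EEpow: "1 - EE^d = fps_X * GG d"
proof -
  have E: "EE = - (fps_X * AA) + 1" using XA by (simp add: algebra_simps)
  have "EE^d = (\<Sum>k\<le>d. of_nat (d choose k) * (- (fps_X * AA))^k * 1^(d-k))"
    unfolding E by (rule binomial_ring)
  also have "\<dots> = (\<Sum>k\<le>d. fps_const (real (d choose k)) * (- (fps_X * AA))^k)"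
    by (simp add: fps_of_nat)
  also have "\<dots> = 1 + (\<Sum>k\<in>{1..d}. fps_const (real (d choose k)) * (- (fps_X * AA))^k)"
  proof -
    have "{..d} = insert 0 {1..d}" by auto
    then show ?thesis by simp
  qed
  also have "(\<Sum>k\<in>{1..d}. fps_const (real (d choose k)) * (- (fps_X * AA))^k)
      = fps_X * (\<Sum>k\<in>{1..d}. fps_const (cc d k) * (fps_X^(k-1) * AA^k))"
    unfolding sum_distrib_left
  proof (rule sum.cong)
    fix k assume "k \<in> {1..d}"
    then obtain j where k: "k = Suc j" by (cases k) auto
    have 1: "(-(fps_X*AA))^k = (-1)^k * (fps_X^k * AA^k)"
      using power_minus[of "fps_X*AA" k] by (simp only: power_mult_distrib)
    have 2: "fps_const (cc d k) = fps_const (real (d choose k)) * (-1)^k"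
      by (simp add: cc_def m1p)
    have 3: "fps_X^k = fps_X * (fps_X^(k-1) :: real fps)" using k by simp
    show "fps_const (real (d choose k)) * (- (fps_X * AA))^k = fps_X * (fps_const (cc d k) * (fps_X^(k-1) * AA^k))"
      unfolding 1 2 3 by (simp only: mult_ac)
  qed simp
  finally show ?thesis by (simp add: GG_def)
qed

lemma termk:
  assumes "k \<ge> 1"
  shows "(fps_X^(k-1) * (QQ^(n+2) * AA^k)) $ n = (if k \<le> n+1 then 1 else 0)"
proof (cases "k \<le> n+1")
  case True
  define p where "p = n + 1 - k"
  have e1: "n + 2 - k = p + 1" and e2: "n - (k-1) = p" using True assms by (simp_all add: p_def)
  have e3: "QQ^(n+2) * AA^k = QQ^(p+1)" using True QpowA[of k "n+2"] e1 by simp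
  have nl: "(n < k - 1) = False" using True assms by simp
  have "(fps_X^(k-1) * (QQ^(n+2) * AA^k)) $ n = QQ^(p+1) $ p"
    by (simp only: e3 fps_X_power_mult_nth nl if_False e2)
  then show ?thesis using True L[of p] by simp
next
  case False
  then show ?thesis by (simp add: fps_X_power_mult_nth)
qed

lemma binom_ge: "n + 3 \<le> d \<Longrightarrow> real n + 2 \<le> real ((d - 1) choose (n + 1))"
proof -
  assume "n + 3 \<le> d"
  then have "(n+2) choose (n+1) \<le> (d-1) choose (n+1)" by (intro binomial_right_mono) simp
  moreover have "(n+2) choose (n+1) = n + 2"
    using binomial_symmetric[of 1 "n+2"] by simp
  ultimately show ?thesis by linarith
qed

theorem lemma3p2:
  fixes n d :: nat
  assumes "d \<ge> 1"
    and "int n + 2 - int d < 0"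
  shows "(-1) ^ n * todd_genus_hypersurface n d \<ge> real n + 1"
proof -
  have d0: "real d \<noteq> 0" using assms by simp
  have dn: "n + 3 \<le> d" using assms(2) by linarith
  have ex: "fps_exp (- real d) = EE^d" by (simp add: EE_def fps_exp_power_mult)
  have sh: "fps_shift 1 (1 - fps_exp (- real d)) = GG d"
    by (simp only: ex EEpow mult.commute[of fps_X] fps_shift_times_fps_X')
  have td: "todd_series = QQ" by (simp add: todd_series_def QQ_def AA_def EE_def)
  have eqC: "QQ^(n+2) * (fps_const (1 / real d) * GG d) = fps_const (1 / real d) * (QQ^(n+2) * GG d)"
    by (simp only: mult_ac)
  have T: "todd_genus_hypersurface n d = (QQ^(n+2) * GG d) $ n"
    unfolding todd_genus_hypersurface_def td sh eqC fps_mult_left_const_nth using d0 by simp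
  have "QQ^(n+2) * GG d = - (\<Sum>k\<in>{1..d}. fps_const (cc d k) * (fps_X^(k-1) * (QQ^(n+2) * AA^k)))"
    unfolding GG_def mult_minus_right sum_distrib_left by (simp only: mult_ac)
  then have "(QQ^(n+2) * GG d) $ n = - (\<Sum>k\<in>{1..d}. cc d k * (fps_X^(k-1) * (QQ^(n+2) * AA^k)) $ n)"
    by (simp only: fps_neg_nth fps_sum_nth fps_mult_left_const_nth)
  also have "\<dots> = - (\<Sum>k\<in>{1..d}. cc d k * (if k \<le> n+1 then 1 else 0))"
    by (intro arg_cong[where f=uminus] sum.cong refl) (subst termk, auto)
  also have "\<dots> = - (\<Sum>k\<in>{1..n+1}. cc d k)"
  proof -
    have "{k\<in>{1..d}. k \<le> n+1} = {1..n+1}" using dn by auto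
    then show ?thesis by (simp add: sum.inter_filter[symmetric] if_distrib cong: if_cong)
  qed
  also have "(\<Sum>k\<in>{1..n+1}. cc d k) = (\<Sum>k\<le>n+1. cc d k) - 1"
  proof -
    have "{..n+1} = insert 0 {1..n+1}" by auto
    then show ?thesis by (simp add: cc_def)
  qed
  also have "(\<Sum>k\<le>n+1. cc d k) = (-1)^(n+1) * real ((d-1) choose (n+1))"
    using alt[of d "n+1"] assms(1) by (simp add: cc_def mult.commute)
  finally have "todd_genus_hypersurface n d = 1 + (-1)^n * real ((d-1) choose (n+1))"
    using T by simp
  then have "(-1) ^ n * todd_genus_hypersurface n d = (-1)^n + real ((d-1) choose (n+1))"
    by (simp add: algebra_simps flip: power_add mult_2)
  moreover have "(-1::real)^n \<ge> -1" by (cases "even n") simp_all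
  ultimately show ?thesis using binom_ge[OF dn] by linarith
qed

end
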